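(* Let $g$, $\mathbf{g}=g^{\oplus n}$ be as in the context, and let $\mathbf{A},\mathbf{B},\mathbf{C},\mathbf{D}$ be linear operators on $\mathbf{g}$ with components $A_{ij},B_{ij},C_{ij},D_{ij}$ such that $A_{ij}^*=-A_{ji}$, $D_{ij}^*=-D_{ji}$, $B_{ij}^*=C_{ji}$ and such that PB$(\mathbf{A},\mathbf{B},\mathbf{C},\mathbf{D})$ is a Poisson bracket on $\mathbf{g}$. Let $\varphi$ be a smooth Ad-invariant function on $g$ and $\Phi(\mathbf{u})=\varphi(u_n\cdots u_1)$. For $1\le j\le n$ put $T_j=u_j\cdots u_1\cdot u_n\cdots u_{j+1}$ (so $T_n=u_n\cdots u_1$). Then the Hamiltonian equations of motion on $\mathbf{g}$ generated by $\Phi$ are $\dot u_i=u_i\,\mathcal{R}_i-\mathcal{L}_i\,u_i$, $i=1,\dots,n$, where $\mathcal{R}_i=\sum_{j=1}^n\big(A_{i,j+1}+B_{i,j}\big)\big(d\varphi(T_j)\big)$ and $\mathcal{L}_i=\sum_{j=1}^n\big(D_{i,j}+C_{i,j+1}\big)\big(d\varphi(T_j)\big)$, with subscripts taken mod $n$ (so $A_{i,n+1}=A_{i,1}$, $C_{i,n+1}=C_{i,1}$).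
   Context: $g$ is an associative algebra with a nondegenerate symmetric bilinear form $\langle\cdot,\cdot\rangle$ with $\langle uv,w\rangle=\langle u,vw\rangle$; $X^*$ denotes the adjoint of a linear operator $X$ on $g$. For smooth $\varphi$ on $g$, $\nabla\varphi(u)$ is defined by $\langle\nabla\varphi(u),X\rangle=\frac{d}{d\varepsilon}\varphi(u+\varepsilon X)|_{\varepsilon=0}$, $d\varphi(u)=u\nabla\varphi(u)$, $d'\varphi(u)=\nabla\varphi(u)u$. $\varphi$ is Ad-invariant if $\varphi(huh^{-1})=\varphi(u)$ for invertible $h$ (equivalently $d\varphi=d'\varphi$). $\mathbf{g}=g\oplus\cdots\oplus g$ ($n$ copies), componentwise multiplication, form $\langle\langle\mathbf{u},\mathbf{v}\rangle\rangle=\sum_k\langle u_k,v_k\rangle$. Components of an operator: $(\mathbf{A}(\mathbf{u}))_i=\sum_j A_{ij}(u_j)$. For smooth $\Phi$ on $\mathbf{g}$, $\nabla_j\Phi$ is the $j$-th component of its gradient, $d_j\Phi=u_j\nabla_j\Phi$, $d'_j\Phi=\nabla_j\Phi\,u_j$, and PB$(\mathbf{A},\mathbf{B},\mathbf{C},\mathbf{D})$ is $\{\Phi,\Psi\}(\mathbf{u})=\sum_{i,j}\big(\langle A_{ij}(d'_j\Phi),d'_i\Psi\rangle-\langle D_{ij}(d_j\Phi),d_i\Psi\rangle+\langle B_{ij}(d_j\Phi),d'_i\Psi\rangle-\langle C_{ij}(d'_j\Phi),d_i\Psi\rangle\big)$. The Hamiltonian equations generated by $\Phi$ are the equations $\frac{d}{dt}\ell(\mathbf{u})=\{\Phi,\ell\}(\mathbf{u})$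 for all linear functions $\ell$ on $\mathbf{g}$. *)

theory Defs
  imports "HOL-Analysis.Analysis"
begin

primrec Ck :: "nat \<Rightarrow> ('v::real_normed_vector \<Rightarrow> real) \<Rightarrow> bool" where
  "Ck 0 f = continuous_on UNIV f"
| "Ck (Suc k) f = ((\<forall>x. f differentiable (at x)) \<and>
      (\<forall>v. Ck k (\<lambda>x. frechet_derivative f (at x) v)))"

definition smooth :: "('v::real_normed_vector \<Rightarrow> real) \<Rightarrow> bool" where
  "smooth f \<longleftrightarrow> (\<forall>k. Ck k f)"

definition grad :: "('v::real_vector \<Rightarrow> 'v \<Rightarrow> real) \<Rightarrow> ('v \<Rightarrow> real) \<Rightarrow> 'v \<Rightarrow> 'v" where
  "grad form f u = (THE w. \<forall>X. ((\<lambda>eps. f (u + eps *\<^sub>R X)) has_real_derivative form w X) (at 0))"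

definition adjoint :: "('v \<Rightarrow> 'v \<Rightarrow> real) \<Rightarrow> ('v \<Rightarrow> 'v) \<Rightarrow> ('v \<Rightarrow> 'v)" where
  "adjoint form X = (THE Y. \<forall>u v. form (X u) v = form u (Y v))"

definition inv_form :: "('a::real_algebra_1 \<Rightarrow> 'a \<Rightarrow> real) \<Rightarrow> bool" where
  "inv_form form \<longleftrightarrow> bilinear form \<and> (\<forall>u v. form u v = form v u)
     \<and> (\<forall>u. (\<forall>v. form u v = 0) \<longrightarrow> u = 0)
     \<and> (\<forall>u v w. form (u * v) w = form u (v * w))"

definition dphi :: "('a::real_algebra_1 \<Rightarrow> 'a \<Rightarrow> real) \<Rightarrow> ('a \<Rightarrow> real) \<Rightarrow> 'a \<Rightarrow> 'a" where
  "dphi form f u = u * grad form f u"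

definition Ad_invariant :: "('a::real_algebra_1 \<Rightarrow> real) \<Rightarrow> bool" where
  "Ad_invariant f \<longleftrightarrow> (\<forall>h k u. h * k = 1 \<and> k * h = 1 \<longrightarrow> f (h * u * k) = f u)"

section \<open>The direct sum g^n, indexed by 1..n through a bijection ix : {1..n} -> 'n\<close>

definition bform :: "('a \<Rightarrow> 'a \<Rightarrow> real) \<Rightarrow> 'a ^ 'n::finite \<Rightarrow> 'a ^ 'n \<Rightarrow> real" where
  "bform form u v = (\<Sum>k\<in>UNIV. form (u $ k) (v $ k))"

text \<open>Component A_ij of an operator on g^n: (A u)_i = sum_j A_ij (u_j).\<close>
definition cmp :: "(nat \<Rightarrow> 'n::finite) \<Rightarrow> ('a::zero ^ 'n \<Rightarrow> 'a ^ 'n) \<Rightarrow> nat \<Rightarrow> nat \<Rightarrow> 'a \<Rightarrow> 'a" where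
  "cmp ix A i j x = A (\<chi> k. if k = ix j then x else 0) $ ix i"

definition dj :: "('a::real_algebra_1 \<Rightarrow> 'a \<Rightarrow> real) \<Rightarrow> (nat \<Rightarrow> 'n::finite)
    \<Rightarrow> ('a ^ 'n \<Rightarrow> real) \<Rightarrow> nat \<Rightarrow> 'a ^ 'n \<Rightarrow> 'a" where
  "dj form ix F j u = u $ ix j * grad (bform form) F u $ ix j"

definition dj' :: "('a::real_algebra_1 \<Rightarrow> 'a \<Rightarrow> real) \<Rightarrow> (nat \<Rightarrow> 'n::finite)
    \<Rightarrow> ('a ^ 'n \<Rightarrow> real) \<Rightarrow> nat \<Rightarrow> 'a ^ 'n \<Rightarrow> 'a" where
  "dj' form ix F j u = grad (bform form) F u $ ix j * u $ ix j"

definition PB :: "('a::real_algebra_1 \<Rightarrow> 'a \<Rightarrow> real) \<Rightarrow> nat \<Rightarrow> (nat \<Rightarrow> 'n::finite)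
   \<Rightarrow> ('a ^ 'n \<Rightarrow> 'a ^ 'n) \<Rightarrow> ('a ^ 'n \<Rightarrow> 'a ^ 'n) \<Rightarrow> ('a ^ 'n \<Rightarrow> 'a ^ 'n) \<Rightarrow> ('a ^ 'n \<Rightarrow> 'a ^ 'n)
   \<Rightarrow> ('a ^ 'n \<Rightarrow> real) \<Rightarrow> ('a ^ 'n \<Rightarrow> real) \<Rightarrow> 'a ^ 'n \<Rightarrow> real" where
  "PB form n ix A B C D F G u =
     (\<Sum>i=1..n. \<Sum>j=1..n.
        form (cmp ix A i j (dj' form ix F j u)) (dj' form ix G i u)
      - form (cmp ix D i j (dj form ix F j u)) (dj form ix G i u)
      + form (cmp ix B i j (dj form ix F j u)) (dj' form ix G i u)
      - form (cmp ix C i j (dj' form ix F j u)) (dj form ix G i u))"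

definition is_poisson_bracket ::
  "(('v::real_normed_vector \<Rightarrow> real) \<Rightarrow> ('v \<Rightarrow> real) \<Rightarrow> ('v \<Rightarrow> real)) \<Rightarrow> bool" where
  "is_poisson_bracket P \<longleftrightarrow>
     (\<forall>F G H a b. smooth F \<and> smooth G \<and> smooth H \<longrightarrow>
        smooth (P F G)
      \<and> P (\<lambda>x. a * F x + b * G x) H = (\<lambda>x. a * P F H x + b * P G H x)
      \<and> P F G = (\<lambda>x. - P G F x)
      \<and> P F (\<lambda>x. G x * H x) = (\<lambda>x. P F G x * H x + G x * P F H x)
      \<and> (\<lambda>x. P F (P G H) x + P G (P H F) x + P H (P F G) x) = (\<lambda>x. 0))"

definition rprod :: "(nat \<Rightarrow> 'a::monoid_mult) \<Rightarrow> nat \<Rightarrow> nat \<Rightarrow> 'a" where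
  "rprod u a b = prod_list (map u (rev [a..<b+1]))"

definition Tprod :: "(nat \<Rightarrow> 'a::monoid_mult) \<Rightarrow> nat \<Rightarrow> nat \<Rightarrow> 'a" where
  "Tprod u n j = rprod u 1 j * rprod u (j + 1) n"

end

theory Submission
  imports Defs "HOL-Computational_Algebra.Polynomial"
begin


lemma form_bb:
  fixes form :: "'a::{real_algebra_1, euclidean_space} \<Rightarrow> 'a \<Rightarrow> real"
  assumes "inv_form form" shows "bounded_bilinear form"
  using assms bilinear_conv_bounded_bilinear unfolding inv_form_def by blast

lemma form_sym: "inv_form form \<Longrightarrow> form u v = form v u"
  unfolding inv_form_def by blast

lemma form_assoc: "inv_form form \<Longrightarrow> form (u * v) w = form u (v * w)"
  unfolding inv_form_def by blast

lemma form_nondeg: "inv_form form \<Longrightarrow> (\<And>v. form u v = 0) \<Longrightarrow> u = 0"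
  unfolding inv_form_def by blast

lemma mult_bb: "bounded_bilinear ((*) :: 'a::{real_algebra_1, euclidean_space} \<Rightarrow> 'a \<Rightarrow> 'a)"
proof -
  have "bilinear ((*) :: 'a \<Rightarrow> 'a \<Rightarrow> 'a)"
    unfolding bilinear_def
    by (auto intro!: linearI simp: distrib_left distrib_right)
  then show ?thesis using bilinear_conv_bounded_bilinear by blast
qed

lemma form_eq_iff:
  fixes form :: "'a::{real_algebra_1, euclidean_space} \<Rightarrow> 'a \<Rightarrow> real"
  assumes "inv_form form" "\<And>X. form w X = form w' X" shows "w = w'"
proof -
  interpret bounded_bilinear form by (rule form_bb[OF assms(1)])
  have "\<And>X. form (w - w') X = 0" using assms(2) by (simp add: diff_left)
  then show ?thesis using form_nondeg[OF assms(1)] by fastforce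
qed

lemma form_left_mult: "inv_form form \<Longrightarrow> form a (x * u) = form (u * a) x"
  by (metis form_assoc form_sym)

lemma form_right_mult: "inv_form form \<Longrightarrow> form a (u * x) = form (a * u) x"
  by (metis form_assoc form_sym)

lemma form_mid: "inv_form form \<Longrightarrow> form g (N * b * M) = form (M * g * N) b"
  by (metis form_assoc form_sym mult.assoc)

lemma riesz:
  fixes form :: "'a::{real_algebra_1, euclidean_space} \<Rightarrow> 'a \<Rightarrow> real"
  assumes f: "inv_form form" and l: "linear f"
  shows "\<exists>w. \<forall>y. form w y = f y"
proof -
  interpret bounded_bilinear form by (rule form_bb[OF f])
  define J where "J w = (\<Sum>b\<in>Basis. form w b *\<^sub>R b)" for w
  have fJ: "form w y = J w \<bullet> y" for w y
  proof -
    have "form w y = form w (\<Sum>b\<in>Basis. (y \<bullet> b) *\<^sub>R b)" by (simp add: euclidean_representation)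
    also have "\<dots> = (\<Sum>b\<in>Basis. (y \<bullet> b) * form w b)" by (simp add: sum_right scaleR_right)
    also have "\<dots> = J w \<bullet> y" unfolding J_def by (simp add: inner_sum_right inner_commute mult.commute)
    finally show ?thesis .
  qed
  have linJ: "linear J" unfolding J_def
    by (auto intro!: linearI simp: add_left scaleR_left sum.distrib scaleR_add_left scaleR_sum_right)
  have "inj J"
  proof (rule linear_injective_0[THEN iffD2, OF linJ], intro allI impI)
    fix w assume "J w = 0"
    then have "\<And>y. form w y = 0" using fJ by simp
    then show "w = 0" using form_nondeg[OF f] by blast
  qed
  then have "surj J" using linJ linear_inj_imp_surj by blast
  define v where "v = (\<Sum>b\<in>Basis. f b *\<^sub>R b)"
  have fv: "f y = v \<bullet> y" for y
  proof -
    have "f y = f (\<Sum>b\<in>Basis. (y \<bullet> b) *\<^sub>R b)" by (simp add: euclidean_representation)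
    also have "\<dots> = (\<Sum>b\<in>Basis. (y \<bullet> b) * f b)" using l by (simp add: linear_sum linear_scale)
    also have "\<dots> = v \<bullet> y" unfolding v_def by (simp add: inner_sum_right inner_commute mult.commute)
    finally show ?thesis .
  qed
  obtain w where "J w = v" using \<open>surj J\<close> by (metis surjD)
  then show ?thesis using fJ fv by auto
qed

lemma grad_eq:
  assumes "\<And>X. ((\<lambda>e. f (u + e *\<^sub>R X)) has_real_derivative fm w X) (at 0)"
    and "\<And>w'. (\<And>X. fm w X = fm w' X) \<Longrightarrow> w = w'"
  shows "grad fm f u = w"
  unfolding grad_def
proof (rule the_equality)
  show "\<forall>X. ((\<lambda>e. f (u + e *\<^sub>R X)) has_real_derivative fm w X) (at 0)" using assms(1) by blast
next
  fix w' assume "\<forall>X. ((\<lambda>e. f (u + e *\<^sub>R X)) has_real_derivative fm w' X) (at 0)"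
  then have "fm w X = fm w' X" for X using assms(1) DERIV_unique by blast
  then show "w' = w" using assms(2) by metis
qed

lemma grad_has_derivative:
  fixes form :: "'a::{real_algebra_1, euclidean_space} \<Rightarrow> 'a \<Rightarrow> real"
  assumes f: "inv_form form" and d: "\<phi> differentiable (at p)"
  shows "(\<phi> has_derivative (\<lambda>Y. form (grad form \<phi> p) Y)) (at p)"
proof -
  obtain \<phi>' where D: "(\<phi> has_derivative \<phi>') (at p)" using d unfolding differentiable_def by blast
  then have "linear \<phi>'" using has_derivative_linear by blast
  then obtain g where g: "\<And>y. form g y = \<phi>' y" using riesz[OF f] by blast
  have "grad form \<phi> p = g"
  proof (rule grad_eq)
    fix X
    have "((\<lambda>e. p + e *\<^sub>R X) has_derivative (\<lambda>h. h *\<^sub>R X)) (at 0)"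
      by (auto intro!: derivative_eq_intros)
    moreover have "(\<phi> has_derivative \<phi>') (at (p + 0 *\<^sub>R X))" using D by simp
    ultimately have "((\<lambda>e. \<phi> (p + e *\<^sub>R X)) has_derivative (\<lambda>h. \<phi>' (h *\<^sub>R X))) (at 0)"
      using has_derivative_compose[of "\<lambda>e. p + e *\<^sub>R X"] by (metis (no_types))
    moreover have "(\<lambda>h. \<phi>' (h *\<^sub>R X)) = (*) (form g X)"
      using \<open>linear \<phi>'\<close> g by (auto simp: linear_scale)
    ultimately show "((\<lambda>e. \<phi> (p + e *\<^sub>R X)) has_real_derivative form g X) (at 0)"
      by (simp add: has_field_derivative_def)
  next
    fix w' assume "\<And>X. form g X = form w' X" then show "g = w'" using form_eq_iff[OF f] by blast
  qed
  then show ?thesis using D g by (metis (no_types) ext)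
qed



definition peval :: "real poly \<Rightarrow> 'a::real_algebra_1 \<Rightarrow> 'a" where
  "peval p x = (\<Sum>i\<le>degree p. coeff p i *\<^sub>R x ^ i)"

lemma peval_bound:
  assumes "degree p < N" shows "peval p x = (\<Sum>i<N. coeff p i *\<^sub>R x ^ i)"
proof -
  have "(\<Sum>i<N. coeff p i *\<^sub>R x ^ i) = (\<Sum>i\<le>degree p. coeff p i *\<^sub>R x ^ i)"
    using assms by (intro sum.mono_neutral_right) (auto simp: coeff_eq_0)
  then show ?thesis unfolding peval_def by simp
qed


lemma peval_add: fixes p r :: "real poly" shows "peval (p + r) x = peval p x + peval r x"
proof -
  define N where "N = Suc (degree p + degree r)"
  have d: "degree (p + r) < N" "degree p < N" "degree r < N"
    unfolding N_def using degree_add_le_max[of p r] by auto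
  show ?thesis by (simp only: peval_bound[OF d(1)] peval_bound[OF d(2)] peval_bound[OF d(3)] coeff_add scaleR_add_left sum.distrib)
qed

lemma peval_smult: "peval (smult a p) x = a *\<^sub>R peval p x"
proof -
  have d: "degree (smult a p) < Suc (degree p)" "degree p < Suc (degree p)"
    using degree_smult_le[of a p] by auto
  show ?thesis by (simp only: peval_bound[OF d(1)] peval_bound[OF d(2)] coeff_smult scaleR_sum_right scaleR_scaleR)
qed

lemma peval_pCons: "peval (pCons a p) x = a *\<^sub>R 1 + x * peval p x"
proof -
  have d: "degree (pCons a p) < Suc (Suc (degree p))" "degree p < Suc (degree p)"
    using degree_pCons_le[of a p] by auto
  have "peval (pCons a p) x = (\<Sum>i<Suc (Suc (degree p)). coeff (pCons a p) i *\<^sub>R x ^ i)"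
    by (rule peval_bound[OF d(1)])
  also have "\<dots> = a *\<^sub>R 1 + (\<Sum>i<Suc (degree p). coeff p i *\<^sub>R x ^ Suc i)"
    by (subst sum.lessThan_Suc_shift) simp
  also have "\<dots> = a *\<^sub>R 1 + x * peval p x"
    by (simp only: peval_bound[OF d(2)] sum_distrib_left mult_scaleR_right power_Suc)
  finally show ?thesis .
qed

lemma peval_0 [simp]: "peval 0 x = 0"
  by (simp add: peval_def)

lemma peval_mult: "peval (p * q) x = peval p x * peval q x"
proof (induction p)
  case 0 then show ?case by simp
next
  case (pCons a p)
  show ?case
    by (simp add: peval_add peval_smult peval_pCons pCons.IH distrib_right mult.assoc
        scaleR_conv_of_real)
qed

lemma peval_commute: "x * peval p x = peval p x * x"
  unfolding peval_def
  by (simp add: sum_distrib_left sum_distrib_right mult_scaleR_right mult_scaleR_left power_commutes)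

lemma peval_monom: "peval (monom c k) x = c *\<^sub>R x ^ k"
proof -
  have "degree (monom c k) < Suc k" using degree_monom_le[of c k] by simp
  then have "peval (monom c k) x = (\<Sum>i<Suc k. coeff (monom c k) i *\<^sub>R x ^ i)" by (rule peval_bound)
  also have "\<dots> = c *\<^sub>R x ^ k"
    by (subst sum.lessThan_Suc) (simp add: coeff_monom)
  finally show ?thesis .
qed

lemma peval_sum: "peval (sum f S) x = (\<Sum>i\<in>S. peval (f i) x)"
  by (induction S rule: infinite_finite_induct) (auto simp: peval_add)

lemma peval_diff: "peval (p - q) x = peval p x - peval q x"
proof -
  have "peval ((p - q) + q) x = peval (p - q) x + peval q x" by (rule peval_add)
  then show ?thesis by (simp add: algebra_simps)
qed

lemma power_in_span:
  fixes M :: "'a::{real_algebra_1, euclidean_space}"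
  shows "\<exists>m. M ^ m \<in> span ((\<lambda>i. M ^ i) ` {..<m})"
proof (rule ccontr)
  assume "\<nexists>m. M ^ m \<in> span ((\<lambda>i. M ^ i) ` {..<m})"
  then have H: "M ^ m \<notin> span ((\<lambda>i. M ^ i) ` {..<m})" for m by blast
  have "dim ((\<lambda>i. M ^ i) ` {..<m}) = m" for m
  proof (induction m)
    case 0 then show ?case by simp
  next
    case (Suc m)
    have "(\<lambda>i. M ^ i) ` {..<Suc m} = insert (M ^ m) ((\<lambda>i. M ^ i) ` {..<m})"
      by (simp add: lessThan_Suc)
    then show ?case using H[of m] Suc by (simp add: dim_insert)
  qed
  then have "Suc DIM('a) \<le> DIM('a)" using dim_subset_UNIV by metis
  then show False by simp
qed

lemma annihilating_poly:
  fixes M :: "'a::{real_algebra_1, euclidean_space}"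
  shows "\<exists>p. p \<noteq> 0 \<and> peval p M = 0"
proof -
  obtain m where "M ^ m \<in> span ((\<lambda>i. M ^ i) ` {..<m})" using power_in_span by blast
  define S where "S = (\<lambda>i. M ^ i) ` {..<m}"
  have fS: "finite S" unfolding S_def by simp
  obtain c where c: "M ^ m = (\<Sum>v\<in>S. c v *\<^sub>R v)"
    using \<open>M ^ m \<in> _\<close> unfolding S_def[symmetric] span_finite[OF fS] by blast
  define idx where "idx v = (SOME i. i < m \<and> M ^ i = v)" for v
  have idx: "idx v < m \<and> M ^ idx v = v" if "v \<in> S" for v
  proof -
    have "\<exists>i. i < m \<and> M ^ i = v" using that unfolding S_def by auto
    then show ?thesis unfolding idx_def by (rule someI_ex)
  qed
  define p where "p = monom 1 m - (\<Sum>v\<in>S. monom (c v) (idx v))"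
  have "(\<Sum>v\<in>S. coeff (monom (c v) (idx v)) m) = 0"
    using idx by (intro sum.neutral) (auto simp: coeff_monom)
  then have "coeff p m = 1"
    unfolding p_def by (simp add: coeff_diff coeff_sum)
  then have "p \<noteq> 0" by auto
  moreover have "peval p M = 0"
    unfolding p_def using idx by (simp add: peval_diff peval_sum peval_monom c)
  ultimately show ?thesis by blast
qed



lemma invertible_near:
  fixes M :: "'a::{real_algebra_1, euclidean_space}"
  shows "\<exists>p. p \<noteq> 0 \<and> (\<forall>s. poly p (-s) \<noteq> 0 \<longrightarrow> (\<exists>k. (M + s *\<^sub>R 1) * k = 1 \<and> k * (M + s *\<^sub>R 1) = 1))"
proof -
  obtain p where p: "p \<noteq> 0" "peval p M = 0" using annihilating_poly by blast
  have "\<exists>k. (M + s *\<^sub>R 1) * k = 1 \<and> k * (M + s *\<^sub>R 1) = 1" if r: "poly p (-s) \<noteq> 0" for s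
  proof -
    define q where "q = synthetic_div p (-s)"
    define r where "r = poly p (-s)"
    have "[:s, 1:] * q + [:r:] = p" using synthetic_div_correct'[of "-s" p] unfolding q_def r_def by simp
    then have "peval ([:s, 1:] * q + [:r:]) M = 0" using p by simp
    then have e: "(M + s *\<^sub>R 1) * peval q M + r *\<^sub>R 1 = 0"
      by (simp add: peval_add peval_mult peval_pCons peval_smult distrib_right add.commute)
    define Q where "Q = peval q M"
    have c: "(M + s *\<^sub>R 1) * Q = Q * (M + s *\<^sub>R 1)"
      unfolding Q_def by (simp add: distrib_left distrib_right peval_commute)
    have rne: "r \<noteq> 0" using that r_def by simp
    have e2: "(M + s *\<^sub>R 1) * Q = - (r *\<^sub>R 1)" using e unfolding Q_def by (simp add: eq_neg_iff_add_eq_0)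
    define k where "k = (- inverse r) *\<^sub>R Q"
    have "(M + s *\<^sub>R 1) * k = 1" unfolding k_def using e2 rne by (simp add: mult_scaleR_right)
    moreover have "k * (M + s *\<^sub>R 1) = 1" unfolding k_def using e2 c rne by (simp add: mult_scaleR_left)
    ultimately show ?thesis by blast
  qed
  then show ?thesis using p by blast
qed

lemma phi_cyclic:
  fixes \<phi> :: "'a::{real_algebra_1, euclidean_space} \<Rightarrow> real"
  assumes ad: "Ad_invariant \<phi>" and c: "continuous_on UNIV \<phi>"
  shows "\<phi> (M * N) = \<phi> (N * M)"
proof -
  have inv: "\<phi> (h * N) = \<phi> (N * h)" if "h * k = 1" "k * h = 1" for h k
  proof -
    have "h * (N * h) * k = h * N" by (metis mult.assoc mult.right_neutral that(1))
    then show ?thesis using ad that unfolding Ad_invariant_def by metis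
  qed
  define f where "f s = \<phi> ((M + s *\<^sub>R 1) * N) - \<phi> (N * (M + s *\<^sub>R 1))" for s :: real
  have cphi: "isCont \<phi> x" for x using c by (simp add: continuous_on_eq_continuous_at)
  have c1: "isCont (\<lambda>s. (M + s *\<^sub>R 1) * N) 0"
    by (rule bounded_bilinear.continuous[OF mult_bb]) (intro continuous_intros)+
  have c2: "isCont (\<lambda>s. N * (M + s *\<^sub>R 1)) 0"
    by (rule bounded_bilinear.continuous[OF mult_bb]) (intro continuous_intros)+
  have cf: "isCont f 0" unfolding f_def
    using isCont_o2[OF c1 cphi] isCont_o2[OF c2 cphi] by (intro continuous_intros) auto
  show ?thesis
  proof (rule ccontr)
    assume "\<phi> (M * N) \<noteq> \<phi> (N * M)"
    then have "f 0 \<noteq> 0" unfolding f_def by simp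
    then obtain e where e: "e > 0" "\<And>y. dist 0 y < e \<Longrightarrow> f y \<noteq> 0"
      using continuous_at_avoid[OF cf] by blast
    obtain p where p: "p \<noteq> 0" "\<And>s. poly p (-s) \<noteq> 0 \<Longrightarrow> (\<exists>k. (M + s *\<^sub>R 1) * k = 1 \<and> k * (M + s *\<^sub>R 1) = 1)"
      using invertible_near[of M] by blast
    have fin: "finite {s. poly p (-s) = 0}"
    proof -
      have "{s. poly p (-s) = 0} = uminus ` {x. poly p x = 0}" by (auto intro: image_eqI[where x="- _"])
      then show ?thesis using poly_roots_finite[OF p(1)] by simp
    qed
    have "infinite {0<..<e}" using e(1) by simp
    then have "infinite ({0<..<e} - {s. poly p (-s) = 0})" using fin by (metis Diff_infinite_finite)
    then obtain s where s: "s \<in> {0<..<e}" "poly p (-s) \<noteq> 0" by (metis (mono_tags, lifting) Diff_iff finite.emptyI mem_Collect_eq ex_in_conv)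
    then obtain k where "(M + s *\<^sub>R 1) * k = 1" "k * (M + s *\<^sub>R 1) = 1" using p(2) by blast
    then have "f s = 0" unfolding f_def using inv by simp
    moreover have "dist 0 s < e" using s by (simp add: dist_real_def)
    ultimately show False using e(2) by blast
  qed
qed



lemma smooth_diff: "smooth \<phi> \<Longrightarrow> \<phi> differentiable (at x)"
  unfolding smooth_def by (metis Ck.simps(2))

lemma smooth_cont: "smooth \<phi> \<Longrightarrow> continuous_on UNIV \<phi>"
  unfolding smooth_def by (metis Ck.simps(1))

lemma deriv_line:
  assumes "(\<phi> has_derivative D) (at a)"
  shows "((\<lambda>e. \<phi> (a + e *\<^sub>R Y)) has_real_derivative D Y) (at 0)"
proof -
  have "((\<lambda>e. a + e *\<^sub>R Y) has_derivative (\<lambda>h. h *\<^sub>R Y)) (at 0)"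
    by (auto intro!: derivative_eq_intros)
  moreover have "(\<phi> has_derivative D) (at (a + 0 *\<^sub>R Y))" using assms by simp
  ultimately have "((\<lambda>e. \<phi> (a + e *\<^sub>R Y)) has_derivative (\<lambda>h. D (h *\<^sub>R Y))) (at 0)"
    using has_derivative_compose[of "\<lambda>e. a + e *\<^sub>R Y"] by (metis (no_types))
  moreover have "(\<lambda>h. D (h *\<^sub>R Y)) = (*) (D Y)"
    using has_derivative_linear[OF assms] by (auto simp: linear_scale)
  ultimately show ?thesis by (simp add: has_field_derivative_def)
qed

lemma grad_cyclic:
  fixes \<phi> :: "'a::{real_algebra_1, euclidean_space} \<Rightarrow> real"
  assumes f: "inv_form form" and ad: "Ad_invariant \<phi>" and sm: "smooth \<phi>"
  shows "grad form \<phi> (M * N) * M = M * grad form \<phi> (N * M)"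
proof -
  define G1 where "G1 = grad form \<phi> (M * N)"
  define G2 where "G2 = grad form \<phi> (N * M)"
  have "form G1 (M * X) = form G2 (X * M)" for X
  proof -
    have d1: "((\<lambda>e. \<phi> (M * N + e *\<^sub>R (M * X))) has_real_derivative form G1 (M * X)) (at 0)"
      unfolding G1_def by (rule deriv_line[OF grad_has_derivative[OF f smooth_diff[OF sm]]])
    have d2: "((\<lambda>e. \<phi> (N * M + e *\<^sub>R (X * M))) has_real_derivative form G2 (X * M)) (at 0)"
      unfolding G2_def by (rule deriv_line[OF grad_has_derivative[OF f smooth_diff[OF sm]]])
    have "(\<lambda>e. \<phi> (M * N + e *\<^sub>R (M * X))) = (\<lambda>e. \<phi> (N * M + e *\<^sub>R (X * M)))"
    proof
      fix e
      have "M * N + e *\<^sub>R (M * X) = M * (N + e *\<^sub>R X)" by (simp add: distrib_left mult_scaleR_right)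
      moreover have "N * M + e *\<^sub>R (X * M) = (N + e *\<^sub>R X) * M" by (simp add: distrib_right mult_scaleR_left)
      ultimately show "\<phi> (M * N + e *\<^sub>R (M * X)) = \<phi> (N * M + e *\<^sub>R (X * M))"
        using phi_cyclic[OF ad smooth_cont[OF sm]] by metis
    qed
    then show ?thesis using d1 d2 DERIV_unique by metis
  qed
  then have "form (G1 * M) X = form (M * G2) X" for X
    using form_right_mult[OF f] form_left_mult[OF f] by metis
  then show ?thesis unfolding G1_def G2_def using form_eq_iff[OF f] by blast
qed

lemma grad_comm:
  fixes \<phi> :: "'a::{real_algebra_1, euclidean_space} \<Rightarrow> real"
  assumes f: "inv_form form" and ad: "Ad_invariant \<phi>" and sm: "smooth \<phi>"
  shows "grad form \<phi> P * P = P * grad form \<phi> P"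
  using grad_cyclic[OF f ad sm, of P 1] by simp

lemma grad_cyclic2:
  fixes \<phi> :: "'a::{real_algebra_1, euclidean_space} \<Rightarrow> real"
  assumes f: "inv_form form" and ad: "Ad_invariant \<phi>" and sm: "smooth \<phi>"
  shows "M * grad form \<phi> (N * M) * N = M * N * grad form \<phi> (M * N)"
proof -
  have "M * grad form \<phi> (N * M) * N = grad form \<phi> (M * N) * (M * N)"
    using grad_cyclic[OF f ad sm, of M N] by (metis mult.assoc)
  also have "\<dots> = M * N * grad form \<phi> (M * N)" using grad_comm[OF f ad sm] by simp
  finally show ?thesis .
qed



lemma rprod_empty: "j < i \<Longrightarrow> rprod a i j = 1"
  unfolding rprod_def by simp

lemma rprod_Suc: "i \<le> Suc m \<Longrightarrow> rprod a i (Suc m) = a (Suc m) * rprod a i m"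
  unfolding rprod_def by (simp add: upt_Suc_append)

definition Dprod :: "(nat \<Rightarrow> 'a::real_algebra_1) \<Rightarrow> (nat \<Rightarrow> 'a) \<Rightarrow> nat \<Rightarrow> 'a" where
  "Dprod a b m = (\<Sum>j=1..m. rprod a (j+1) m * b j * rprod a 1 (j-1))"

lemma Dprod_Suc: "Dprod a b (Suc m) = b (Suc m) * rprod a 1 m + a (Suc m) * Dprod a b m"
proof -
  have "Dprod a b (Suc m) = (\<Sum>j=1..m. rprod a (j+1) (Suc m) * b j * rprod a 1 (j-1))
      + rprod a (Suc m + 1) (Suc m) * b (Suc m) * rprod a 1 m"
    unfolding Dprod_def by simp
  also have "rprod a (Suc m + 1) (Suc m) = 1" by (simp add: rprod_empty)
  also have "(\<Sum>j=1..m. rprod a (j+1) (Suc m) * b j * rprod a 1 (j-1))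
      = (\<Sum>j=1..m. a (Suc m) * (rprod a (j+1) m * b j * rprod a 1 (j-1)))"
    by (intro sum.cong refl) (simp add: rprod_Suc mult.assoc)
  finally show ?thesis unfolding Dprod_def by (simp add: sum_distrib_left add.commute)
qed

lemma rprod_deriv:
  fixes a b :: "nat \<Rightarrow> 'a::{real_algebra_1, euclidean_space}"
  shows "((\<lambda>e. rprod (\<lambda>k. a k + e *\<^sub>R b k) 1 m) has_derivative (\<lambda>h. h *\<^sub>R Dprod a b m)) (at 0)"
proof (induction m)
  case 0
  show ?case by (simp add: rprod_empty Dprod_def)
next
  case (Suc m)
  have eq: "(\<lambda>e. rprod (\<lambda>k. a k + e *\<^sub>R b k) 1 (Suc m))
      = (\<lambda>e. (a (Suc m) + e *\<^sub>R b (Suc m)) * rprod (\<lambda>k. a k + e *\<^sub>R b k) 1 m)"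
    by (simp add: rprod_Suc)
  have d1: "((\<lambda>e. a (Suc m) + e *\<^sub>R b (Suc m)) has_derivative (\<lambda>h. h *\<^sub>R b (Suc m))) (at 0)"
    by (auto intro!: derivative_eq_intros)
  have "((\<lambda>e. (a (Suc m) + e *\<^sub>R b (Suc m)) * rprod (\<lambda>k. a k + e *\<^sub>R b k) 1 m) has_derivative
     (\<lambda>h. (a (Suc m) + 0 *\<^sub>R b (Suc m)) * (h *\<^sub>R Dprod a b m) + (h *\<^sub>R b (Suc m)) * rprod (\<lambda>k. a k + 0 *\<^sub>R b k) 1 m)) (at 0)"
    by (rule bounded_bilinear.FDERIV[OF mult_bb d1 Suc.IH])
  moreover have "(\<lambda>h. (a (Suc m) + 0 *\<^sub>R b (Suc m)) * (h *\<^sub>R Dprod a b m) + (h *\<^sub>R b (Suc m)) * rprod (\<lambda>k. a k + 0 *\<^sub>R b k) 1 m)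
     = (\<lambda>h. h *\<^sub>R Dprod a b (Suc m))"
    by (simp add: Dprod_Suc scaleR_add_right mult_scaleR_left mult_scaleR_right add.commute)
  ultimately show ?case using eq by simp
qed



definition axv :: "'n \<Rightarrow> 'a::zero \<Rightarrow> 'a ^ 'n::finite" where
  "axv k y = (\<chi> j. if j = k then y else 0)"

lemma bform_axv:
  fixes form :: "'a::{real_algebra_1, euclidean_space} \<Rightarrow> 'a \<Rightarrow> real"
  assumes f: "inv_form form"
  shows "bform form w (axv k Y) = form (w $ k) Y"
proof -
  interpret bounded_bilinear form by (rule form_bb[OF f])
  have "bform form w (axv k Y) = (\<Sum>j\<in>UNIV. if j = k then form (w $ j) Y else 0)"
    unfolding bform_def axv_def by (intro sum.cong refl) (auto simp: zero_right)
  then show ?thesis by simp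
qed

lemma bform_eq_iff:
  fixes form :: "'a::{real_algebra_1, euclidean_space} \<Rightarrow> 'a \<Rightarrow> real"
  assumes f: "inv_form form" and h: "\<And>X. bform form w X = bform form w' X"
  shows "w = w'"
proof -
  have "w $ k = w' $ k" for k
    using h[of "axv k _"] unfolding bform_axv[OF f] by (intro form_eq_iff[OF f]) blast
  then show ?thesis by (simp add: vec_eq_iff)
qed

lemma rprod_split: "i \<le> j + 1 \<Longrightarrow> j \<le> m \<Longrightarrow> rprod a i m = rprod a (j+1) m * rprod a i j"
proof (induction m)
  case 0 then show ?case by (simp add: rprod_empty)
next
  case (Suc m)
  show ?case
  proof (cases "j = Suc m")
    case True then show ?thesis by (simp add: rprod_empty)
  next
    case False
    then have "j \<le> m" using Suc by simp
    then show ?thesis using Suc by (simp add: rprod_Suc mult.assoc)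
  qed
qed

lemma rprod_single: "1 \<le> j \<Longrightarrow> rprod a j j = a j"
  using rprod_Suc[of j "j - 1" a] by (simp add: rprod_empty)

lemma rprod_left: "1 \<le> j \<Longrightarrow> rprod a 1 j = a j * rprod a 1 (j - 1)"
  using rprod_Suc[of 1 "j - 1" a] by simp

lemma rprod_right: "1 \<le> j \<Longrightarrow> j \<le> n \<Longrightarrow> rprod a j n = rprod a (j+1) n * a j"
  using rprod_split[of j j n a] rprod_single[of j a] by simp

definition Gv :: "('a::{real_algebra_1, euclidean_space} \<Rightarrow> 'a \<Rightarrow> real) \<Rightarrow> ('a \<Rightarrow> real) \<Rightarrow> nat \<Rightarrow> (nat \<Rightarrow> 'n::finite) \<Rightarrow> 'a ^ 'n \<Rightarrow> 'a ^ 'n" where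
  "Gv form \<phi> n ix u = (\<chi> k. let j = inv_into {1..n} ix k; a = (\<lambda>k. u $ ix k) in
      rprod a 1 (j - 1) * grad form \<phi> (rprod a 1 n) * rprod a (j+1) n)"

lemma grad_Phi:
  fixes form :: "'a::{real_algebra_1, euclidean_space} \<Rightarrow> 'a \<Rightarrow> real" and ix :: "nat \<Rightarrow> 'n::finite"
  assumes f: "inv_form form" and ix: "bij_betw ix {1..n} UNIV" and sm: "smooth \<phi>"
  shows "grad (bform form) (\<lambda>u. \<phi> (rprod (\<lambda>k. u $ ix k) 1 n)) u = Gv form \<phi> n ix u"
proof (rule grad_eq)
  fix X :: "'a ^ 'n"
  define a where "a = (\<lambda>k. u $ ix k)"
  define b where "b = (\<lambda>k. X $ ix k)"
  define P where "P = rprod a 1 n"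
  define g where "g = grad form \<phi> P"
  have dphi: "(\<phi> has_derivative form g) (at (rprod (\<lambda>k. a k + 0 *\<^sub>R b k) 1 n))"
    unfolding g_def P_def using grad_has_derivative[OF f smooth_diff[OF sm]] by simp
  have "((\<lambda>e. \<phi> (rprod (\<lambda>k. a k + e *\<^sub>R b k) 1 n)) has_derivative (\<lambda>h. form g (h *\<^sub>R Dprod a b n))) (at 0)"
    using has_derivative_compose[OF rprod_deriv dphi] by (simp add: o_def)
  moreover have "(\<lambda>h. form g (h *\<^sub>R Dprod a b n)) = (*) (form g (Dprod a b n))"
    using has_derivative_linear[OF dphi] by (auto simp: linear_scale)
  moreover have "(\<lambda>e. \<phi> (rprod (\<lambda>k. (u + e *\<^sub>R X) $ ix k) 1 n)) = (\<lambda>e. \<phi> (rprod (\<lambda>k. a k + e *\<^sub>R b k) 1 n))"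
    unfolding a_def b_def by simp
  ultimately have D: "((\<lambda>e. \<phi> (rprod (\<lambda>k. (u + e *\<^sub>R X) $ ix k) 1 n)) has_real_derivative form g (Dprod a b n)) (at 0)"
    by (simp add: has_field_derivative_def)
  interpret bounded_bilinear form by (rule form_bb[OF f])
  have "form g (Dprod a b n) = (\<Sum>j=1..n. form (rprod a 1 (j-1) * g * rprod a (j+1) n) (b j))"
    unfolding Dprod_def by (simp add: sum_right form_mid[OF f])
  also have "\<dots> = (\<Sum>j=1..n. form (Gv form \<phi> n ix u $ ix j) (X $ ix j))"
    unfolding Gv_def a_def b_def g_def P_def
    apply (intro sum.cong refl)
    subgoal for j using bij_betw_inv_into_left[OF ix, of j] by (simp add: Let_def)
    done
  also have "\<dots> = bform form (Gv form \<phi> n ix u) X"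
    unfolding bform_def by (rule sum.reindex_bij_betw[OF ix, where g = "\<lambda>k. form (Gv form \<phi> n ix u $ k) (X $ k)"])
  finally show "((\<lambda>e. \<phi> (rprod (\<lambda>k. (u + e *\<^sub>R X) $ ix k) 1 n)) has_real_derivative bform form (Gv form \<phi> n ix u) X) (at 0)"
    using D by simp
next
  fix w' assume "\<And>X. bform form (Gv form \<phi> n ix u) X = bform form w' X"
  then show "Gv form \<phi> n ix u = w'" by (rule bform_eq_iff[OF f])
qed



lemma X_eq:
  fixes form :: "'a::{real_algebra_1, euclidean_space} \<Rightarrow> 'a \<Rightarrow> real"
  assumes f: "inv_form form" and ad: "Ad_invariant \<phi>" and sm: "smooth \<phi>"
    and i: "1 \<le> i" "i \<le> n"
  shows "rprod a 1 i * grad form \<phi> (rprod a 1 n) * rprod a (i+1) n = dphi form \<phi> (Tprod a n i)"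
proof -
  have "rprod a 1 n = rprod a (i+1) n * rprod a 1 i" using rprod_split[of 1 i n a] i by simp
  then show ?thesis
    unfolding dphi_def Tprod_def using grad_cyclic2[OF f ad sm, of "rprod a 1 i" "rprod a (i+1) n"] by simp
qed

lemma dj_Phi:
  fixes form :: "'a::{real_algebra_1, euclidean_space} \<Rightarrow> 'a \<Rightarrow> real" and ix :: "nat \<Rightarrow> 'n::finite"
  assumes f: "inv_form form" and ix: "bij_betw ix {1..n} UNIV" and sm: "smooth \<phi>" and ad: "Ad_invariant \<phi>"
    and j: "j \<in> {1..n}"
  shows "dj form ix (\<lambda>u. \<phi> (rprod (\<lambda>k. u $ ix k) 1 n)) j u = dphi form \<phi> (Tprod (\<lambda>k. u $ ix k) n j)"
proof -
  define a where "a = (\<lambda>k. u $ ix k)"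
  have G: "grad (bform form) (\<lambda>u. \<phi> (rprod (\<lambda>k. u $ ix k) 1 n)) u $ ix j
      = rprod a 1 (j - 1) * grad form \<phi> (rprod a 1 n) * rprod a (j+1) n"
    unfolding grad_Phi[OF f ix sm] Gv_def a_def using bij_betw_inv_into_left[OF ix j] by (simp add: Let_def)
  have "dj form ix (\<lambda>u. \<phi> (rprod (\<lambda>k. u $ ix k) 1 n)) j u
      = a j * (rprod a 1 (j - 1) * grad form \<phi> (rprod a 1 n) * rprod a (j+1) n)"
    unfolding dj_def G by (simp add: a_def)
  also have "\<dots> = rprod a 1 j * grad form \<phi> (rprod a 1 n) * rprod a (j+1) n"
    using rprod_left[of j a] j by (simp add: mult.assoc)
  also have "\<dots> = dphi form \<phi> (Tprod a n j)" using X_eq[OF f ad sm] j by simp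
  finally show ?thesis by (simp add: a_def)
qed

lemma dj'_Phi:
  fixes form :: "'a::{real_algebra_1, euclidean_space} \<Rightarrow> 'a \<Rightarrow> real" and ix :: "nat \<Rightarrow> 'n::finite"
  assumes f: "inv_form form" and ix: "bij_betw ix {1..n} UNIV" and sm: "smooth \<phi>" and ad: "Ad_invariant \<phi>"
    and j: "j \<in> {1..n}"
  shows "dj' form ix (\<lambda>u. \<phi> (rprod (\<lambda>k. u $ ix k) 1 n)) j u
     = dphi form \<phi> (Tprod (\<lambda>k. u $ ix k) n (if j = 1 then n else j - 1))"
proof -
  define a where "a = (\<lambda>k. u $ ix k)"
  have G: "grad (bform form) (\<lambda>u. \<phi> (rprod (\<lambda>k. u $ ix k) 1 n)) u $ ix j
      = rprod a 1 (j - 1) * grad form \<phi> (rprod a 1 n) * rprod a (j+1) n"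
    unfolding grad_Phi[OF f ix sm] Gv_def a_def using bij_betw_inv_into_left[OF ix j] by (simp add: Let_def)
  have "dj' form ix (\<lambda>u. \<phi> (rprod (\<lambda>k. u $ ix k) 1 n)) j u
      = rprod a 1 (j - 1) * grad form \<phi> (rprod a 1 n) * rprod a (j+1) n * a j"
    unfolding dj'_def G by (simp add: a_def)
  also have "\<dots> = rprod a 1 (j - 1) * grad form \<phi> (rprod a 1 n) * rprod a j n"
    using rprod_right[of j n a] j by (simp add: mult.assoc)
  also have "\<dots> = dphi form \<phi> (Tprod a n (if j = 1 then n else j - 1))"
  proof (cases "j = 1")
    case True
    have "rprod a 1 0 = 1" "rprod a (n + 1) n = 1" by (simp_all add: rprod_empty)
    then show ?thesis using True grad_comm[OF f ad sm, of "rprod a 1 n"] unfolding dphi_def Tprod_def by simp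
  next
    case False
    then have "1 \<le> j - 1" "j - 1 \<le> n" "j - 1 + 1 = j" using j by auto
    then show ?thesis using X_eq[OF f ad sm, of "j - 1" n a] False by simp
  qed
  finally show ?thesis by (simp add: a_def)
qed



lemma linear_axv: "linear (axv k :: 'a::real_vector \<Rightarrow> 'a ^ 'n::finite)"
  unfolding axv_def by (auto intro!: linearI simp: vec_eq_iff)

lemma vec_decomp: "(\<Sum>k\<in>UNIV. axv k (X $ k)) = (X :: 'a::real_vector ^ 'n::finite)"
  by (simp add: vec_eq_iff sum_component axv_def)

lemma linear_decomp:
  fixes l :: "'a::real_vector ^ 'n::finite \<Rightarrow> real"
  assumes "linear l" shows "l X = (\<Sum>k\<in>UNIV. l (axv k (X $ k)))"
  using linear_sum[OF assms, of "\<lambda>k. axv k (X $ k)" UNIV] vec_decomp[of X] by simp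

lemma riesz_vec:
  fixes form :: "'a::{real_algebra_1, euclidean_space} \<Rightarrow> 'a \<Rightarrow> real" and l :: "'a ^ 'n::finite \<Rightarrow> real"
  assumes f: "inv_form form" and l: "linear l"
  shows "\<exists>w. \<forall>X. bform form w X = l X"
proof -
  have "\<forall>k. \<exists>w. \<forall>y. form w y = l (axv k y)"
    using riesz[OF f linear_compose[OF linear_axv l, unfolded o_def]] by blast
  then obtain W where W: "\<And>k y. form (W k) y = l (axv k y)" by metis
  have "bform form (\<chi> k. W k) X = l X" for X
    unfolding bform_def using W linear_decomp[OF l, of X] by simp
  then show ?thesis by blast
qed

lemma grad_linear:
  assumes l: "linear l" and w: "\<And>X. fm w X = l X"
    and u: "\<And>w'. (\<And>X. fm w X = fm w' X) \<Longrightarrow> w = w'"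
  shows "grad fm l u = w"
proof (rule grad_eq)
  fix X
  have "((\<lambda>e. l u + e * l X) has_real_derivative l X) (at 0)"
    by (auto intro!: derivative_eq_intros)
  moreover have "(\<lambda>e. l (u + e *\<^sub>R X)) = (\<lambda>e. l u + e * l X)"
    using l by (simp add: linear_add linear_scale)
  ultimately show "((\<lambda>e. l (u + e *\<^sub>R X)) has_real_derivative fm w X) (at 0)" using w by simp
qed (use u in blast)

lemma shift_bij:
  fixes n :: nat
  assumes "n \<ge> 1"
  shows "bij_betw (\<lambda>j. j mod n + 1) {1..n} {1..n}"
    and "\<And>j. j \<in> {1..n} \<Longrightarrow> (if j mod n + 1 = 1 then n else j mod n + 1 - 1) = j"
proof -
  have A: "(if j mod n + 1 = 1 then n else j mod n + 1 - 1) = j" if "j \<in> {1..n}" for j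
  proof (cases "j = n")
    case True then show ?thesis using assms by simp
  next
    case False then have "j < n" using that by auto
    then show ?thesis using that by simp
  qed
  show "(if j mod n + 1 = 1 then n else j mod n + 1 - 1) = j" if "j \<in> {1..n}" for j using A that .
  show "bij_betw (\<lambda>j. j mod n + 1) {1..n} {1..n}"
  proof (rule bij_betw_byWitness[where f' = "\<lambda>j. if j = 1 then n else j - 1"])
    show "\<forall>a\<in>{1..n}. (if a mod n + 1 = 1 then n else a mod n + 1 - 1) = a" using A by blast
    show "\<forall>a'\<in>{1..n}. (if a' = 1 then n else a' - 1) mod n + 1 = a'"
    proof
      fix a' assume "a' \<in> {1..n}"
      then show "(if a' = 1 then n else a' - 1) mod n + 1 = a'" by auto
    qed
    show "(\<lambda>j. j mod n + 1) ` {1..n} \<subseteq> {1..n}" using assms by (auto simp: Suc_le_eq)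
    show "(\<lambda>j. if j = 1 then n else j - 1) ` {1..n} \<subseteq> {1..n}" using assms by auto
  qed
qed



lemma reidx:
  fixes n :: nat
  assumes "n \<ge> 1"
  shows "(\<Sum>j=1..n. h j (if j = 1 then n else j - 1)) = (\<Sum>j=1..n. h (j mod n + 1) j)"
proof -
  have "(\<Sum>j=1..n. h j (if j = 1 then n else j - 1))
      = (\<Sum>j=1..n. h (j mod n + 1) (if j mod n + 1 = 1 then n else j mod n + 1 - 1))"
    using sum.reindex_bij_betw[OF shift_bij(1)[OF assms], of "\<lambda>j. h j (if j = 1 then n else j - 1)"] by simp
  also have "\<dots> = (\<Sum>j=1..n. h (j mod n + 1) j)"
    using shift_bij(2)[OF assms] by (intro sum.cong refl) simp
  finally show ?thesis .
qed

lemma n_pos: "bij_betw (ix :: nat \<Rightarrow> 'n) {1..n} UNIV \<Longrightarrow> n \<ge> 1"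
proof (rule ccontr)
  assume "bij_betw ix {1..n} UNIV" "\<not> n \<ge> 1"
  then have "(UNIV :: 'n set) = {}" by (auto simp: bij_betw_def)
  then show False by simp
qed

lemma PB_eq:
  fixes form :: "'a::{real_algebra_1, euclidean_space} \<Rightarrow> 'a \<Rightarrow> real" and ix :: "nat \<Rightarrow> 'n::finite"
    and A B C D :: "'a ^ 'n \<Rightarrow> 'a ^ 'n" and l :: "'a ^ 'n \<Rightarrow> real"
  assumes f: "inv_form form" and ix: "bij_betw ix {1..n} UNIV" and sm: "smooth \<phi>" and ad: "Ad_invariant \<phi>"
    and l: "linear l" and w: "\<And>X. bform form w X = l X"
  shows "PB form n ix A B C D (\<lambda>u. \<phi> (rprod (\<lambda>k. u $ ix k) 1 n)) l u
    = l (\<chi> k. let i = inv_into {1..n} ix k in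
           u $ k * (\<Sum>j=1..n. cmp ix A i (j mod n + 1) (dphi form \<phi> (Tprod (\<lambda>k. u $ ix k) n j))
                               + cmp ix B i j (dphi form \<phi> (Tprod (\<lambda>k. u $ ix k) n j)))
         - (\<Sum>j=1..n. cmp ix D i j (dphi form \<phi> (Tprod (\<lambda>k. u $ ix k) n j))
                               + cmp ix C i (j mod n + 1) (dphi form \<phi> (Tprod (\<lambda>k. u $ ix k) n j))) * u $ k)"
    (is "_ = l ?V")
proof -
  interpret bounded_bilinear form by (rule form_bb[OF f])
  have n1: "n \<ge> 1" by (rule n_pos[OF ix])
  define E where "E j = dphi form \<phi> (Tprod (\<lambda>k. u $ ix k) n j)" for j
  define p where "p j = (if j = 1 then n else j - 1)" for j :: nat
  define Rr where "Rr i = (\<Sum>j=1..n. cmp ix A i (j mod n + 1) (E j) + cmp ix B i j (E j))" for i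
  define Ll where "Ll i = (\<Sum>j=1..n. cmp ix D i j (E j) + cmp ix C i (j mod n + 1) (E j))" for i
  have gl: "grad (bform form) l u = w"
    by (rule grad_linear[where fm = "bform form" and w = w, OF l w]) (use bform_eq_iff[OF f] in blast)
  have V: "?V $ ix i = u $ ix i * Rr i - Ll i * u $ ix i" if "i \<in> {1..n}" for i
    unfolding Rr_def Ll_def E_def using bij_betw_inv_into_left[OF ix that] by (simp add: Let_def)
  have RA: "(\<Sum>j=1..n. cmp ix A i j (E (p j))) = (\<Sum>j=1..n. cmp ix A i (j mod n + 1) (E j))" for i
    unfolding p_def using reidx[OF n1, of "\<lambda>a b. cmp ix A i a (E b)"] by simp
  have LC: "(\<Sum>j=1..n. cmp ix C i j (E (p j))) = (\<Sum>j=1..n. cmp ix C i (j mod n + 1) (E j))" for i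
    unfolding p_def using reidx[OF n1, of "\<lambda>a b. cmp ix C i a (E b)"] by simp
  have step1: "PB form n ix A B C D (\<lambda>u. \<phi> (rprod (\<lambda>k. u $ ix k) 1 n)) l u
     = (\<Sum>i=1..n. \<Sum>j=1..n.
          form (u $ ix i * cmp ix A i j (E (p j))) (w $ ix i)
        - form (cmp ix D i j (E j) * u $ ix i) (w $ ix i)
        + form (u $ ix i * cmp ix B i j (E j)) (w $ ix i)
        - form (cmp ix C i j (E (p j)) * u $ ix i) (w $ ix i))"
    unfolding PB_def
    apply (intro sum.cong refl)
    subgoal for i j
      using dj_Phi[OF f ix sm ad, of j u] dj'_Phi[OF f ix sm ad, of j u]
      by (simp only: E_def p_def dj_def dj'_def gl form_left_mult[OF f, of _ "w $ ix i" "u $ ix i"]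
          form_right_mult[OF f, of _ "u $ ix i" "w $ ix i"] atLeastAtMost_iff)
    done
  have step2: "(\<Sum>j=1..n.
          form (u $ ix i * cmp ix A i j (E (p j))) (w $ ix i)
        - form (cmp ix D i j (E j) * u $ ix i) (w $ ix i)
        + form (u $ ix i * cmp ix B i j (E j)) (w $ ix i)
        - form (cmp ix C i j (E (p j)) * u $ ix i) (w $ ix i))
      = form (u $ ix i * Rr i - Ll i * u $ ix i) (w $ ix i)" for i
  proof -
    have "form (u $ ix i * Rr i - Ll i * u $ ix i) (w $ ix i)
      = form (u $ ix i * ((\<Sum>j=1..n. cmp ix A i j (E (p j))) + (\<Sum>j=1..n. cmp ix B i j (E j)))
           - ((\<Sum>j=1..n. cmp ix D i j (E j)) + (\<Sum>j=1..n. cmp ix C i j (E (p j)))) * u $ ix i) (w $ ix i)"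
      unfolding Rr_def Ll_def RA LC by (simp add: sum.distrib)
    also have "\<dots> = (\<Sum>j=1..n.
          form (u $ ix i * cmp ix A i j (E (p j))) (w $ ix i)
        - form (cmp ix D i j (E j) * u $ ix i) (w $ ix i)
        + form (u $ ix i * cmp ix B i j (E j)) (w $ ix i)
        - form (cmp ix C i j (E (p j)) * u $ ix i) (w $ ix i))"
      by (simp add: distrib_left distrib_right sum_distrib_left sum_distrib_right diff_left add_left
          sum_left sum.distrib sum_subtractf)
    finally show ?thesis by simp
  qed
  have "PB form n ix A B C D (\<lambda>u. \<phi> (rprod (\<lambda>k. u $ ix k) 1 n)) l u
      = (\<Sum>i=1..n. form (?V $ ix i) (w $ ix i))"
    unfolding step1 step2 using V by (intro sum.cong refl) simp
  also have "\<dots> = bform form ?V w"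
    unfolding bform_def by (rule sum.reindex_bij_betw[OF ix, where g = "\<lambda>k. form (?V $ k) (w $ k)"])
  also have "\<dots> = bform form w ?V"
    unfolding bform_def using form_sym[OF f] by simp
  also have "\<dots> = l ?V" by (rule w)
  finally show ?thesis .
qed



theorem proposition6:
  fixes form :: "'a::{real_algebra_1, euclidean_space} \<Rightarrow> 'a \<Rightarrow> real"
    and n :: nat and ix :: "nat \<Rightarrow> 'n::finite"
    and A B C D :: "'a ^ 'n \<Rightarrow> 'a ^ 'n"
    and \<phi> :: "'a \<Rightarrow> real"
    and \<gamma> :: "real \<Rightarrow> 'a ^ 'n"
  assumes form: "inv_form form"
    and ix: "bij_betw ix {1..n} UNIV"
    and lin: "linear A" "linear B" "linear C" "linear D"
    and adjA: "\<forall>i\<in>{1..n}. \<forall>j\<in>{1..n}. adjoint form (cmp ix A i j) = (\<lambda>x. - cmp ix A j i x)"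
    and adjD: "\<forall>i\<in>{1..n}. \<forall>j\<in>{1..n}. adjoint form (cmp ix D i j) = (\<lambda>x. - cmp ix D j i x)"
    and adjB: "\<forall>i\<in>{1..n}. \<forall>j\<in>{1..n}. adjoint form (cmp ix B i j) = cmp ix C j i"
    and poisson: "is_poisson_bracket (PB form n ix A B C D)"
    and smooth: "smooth \<phi>"
    and adinv: "Ad_invariant \<phi>"
  defines "\<Phi> \<equiv> (\<lambda>u. \<phi> (rprod (\<lambda>k. u $ ix k) 1 n))"
    and "R \<equiv> (\<lambda>u i. \<Sum>j=1..n. cmp ix A i (j mod n + 1) (dphi form \<phi> (Tprod (\<lambda>k. u $ ix k) n j))
                               + cmp ix B i j (dphi form \<phi> (Tprod (\<lambda>k. u $ ix k) n j)))"
    and "L \<equiv> (\<lambda>u i. \<Sum>j=1..n. cmp ix D i j (dphi form \<phi> (Tprod (\<lambda>k. u $ ix k) n j))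
                               + cmp ix C i (j mod n + 1) (dphi form \<phi> (Tprod (\<lambda>k. u $ ix k) n j)))"
  shows "(\<forall>t. \<forall>l. linear l \<longrightarrow>
            ((\<lambda>s. l (\<gamma> s)) has_real_derivative PB form n ix A B C D \<Phi> l (\<gamma> t)) (at t))
     \<longleftrightarrow> (\<forall>t. \<forall>i\<in>{1..n}.
            ((\<lambda>s. \<gamma> s $ ix i) has_vector_derivative
               (\<gamma> t $ ix i * R (\<gamma> t) i - L (\<gamma> t) i * \<gamma> t $ ix i)) (at t))"
proof -
  define V where "V u = (\<chi> k. let i = inv_into {1..n} ix k in u $ k * R u i - L u i * u $ k)" for u
  have K: "PB form n ix A B C D \<Phi> l u = l (V u)" if l: "linear l" for l u
  proof -
    obtain w where w: "\<And>X. bform form w X = l X" using riesz_vec[OF form l] by blast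
    show ?thesis
      unfolding \<Phi>_def V_def R_def L_def using PB_eq[OF form ix smooth adinv l w, of A B C D u] by simp
  qed
  have Vc: "V u $ ix i = u $ ix i * R u i - L u i * u $ ix i" if "i \<in> {1..n}" for u i
    unfolding V_def using bij_betw_inv_into_left[OF ix that] by (simp add: Let_def)
  show ?thesis
  proof
    assume H: "\<forall>t. \<forall>l. linear l \<longrightarrow>
            ((\<lambda>s. l (\<gamma> s)) has_real_derivative PB form n ix A B C D \<Phi> l (\<gamma> t)) (at t)"
    show "\<forall>t. \<forall>i\<in>{1..n}.
            ((\<lambda>s. \<gamma> s $ ix i) has_vector_derivative
               (\<gamma> t $ ix i * R (\<gamma> t) i - L (\<gamma> t) i * \<gamma> t $ ix i)) (at t)"
    proof (intro allI ballI)
      fix t i assume i: "i \<in> {1..n}"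
      define k where "k = ix i"
      have "((\<lambda>s. \<gamma> s $ k) has_derivative (\<lambda>h. h *\<^sub>R (V (\<gamma> t) $ k))) (at t within UNIV)"
      proof (rule has_derivative_componentwise_within[THEN iffD2], rule ballI)
        fix b :: 'a assume b: "b \<in> Basis"
        have ll: "linear (\<lambda>u :: 'a ^ 'n. (u $ k) \<bullet> b)"
          by (rule linearI) (simp_all add: inner_add_left)
        have "((\<lambda>s. \<gamma> s $ k \<bullet> b) has_real_derivative PB form n ix A B C D \<Phi> (\<lambda>u. u $ k \<bullet> b) (\<gamma> t)) (at t)"
          by (rule H[rule_format, OF ll])
        then have "((\<lambda>s. \<gamma> s $ k \<bullet> b) has_real_derivative (V (\<gamma> t) $ k \<bullet> b)) (at t)"
          by (simp only: K[OF ll])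
        then have d: "((\<lambda>s. \<gamma> s $ k \<bullet> b) has_derivative (*) (V (\<gamma> t) $ k \<bullet> b)) (at t)"
          by (simp only: has_field_derivative_def)
        have e: "(*) (V (\<gamma> t) $ k \<bullet> b) = (\<lambda>h. (h *\<^sub>R V (\<gamma> t) $ k) \<bullet> b)"
          by (rule ext) (simp add: mult.commute)
        show "((\<lambda>s. \<gamma> s $ k \<bullet> b) has_derivative (\<lambda>h. (h *\<^sub>R V (\<gamma> t) $ k) \<bullet> b)) (at t within UNIV)"
          using d unfolding e .
      qed
      then show "((\<lambda>s. \<gamma> s $ ix i) has_vector_derivative
               (\<gamma> t $ ix i * R (\<gamma> t) i - L (\<gamma> t) i * \<gamma> t $ ix i)) (at t)"
        unfolding has_vector_derivative_def k_def Vc[OF i, symmetric] .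
    qed
  next
    assume H: "\<forall>t. \<forall>i\<in>{1..n}.
            ((\<lambda>s. \<gamma> s $ ix i) has_vector_derivative
               (\<gamma> t $ ix i * R (\<gamma> t) i - L (\<gamma> t) i * \<gamma> t $ ix i)) (at t)"
    show "\<forall>t. \<forall>l. linear l \<longrightarrow>
            ((\<lambda>s. l (\<gamma> s)) has_real_derivative PB form n ix A B C D \<Phi> l (\<gamma> t)) (at t)"
    proof (intro allI impI)
      fix t and l :: "'a ^ 'n \<Rightarrow> real" assume l: "linear l"
      have comp: "((\<lambda>s. \<gamma> s $ k) has_vector_derivative V (\<gamma> t) $ k) (at t)" for k
      proof -
        define i where "i = inv_into {1..n} ix k"
        have i: "i \<in> {1..n}" "ix i = k" unfolding i_def
          using bij_betw_inv_into_right[OF ix] bij_betw_imp_surj_on[OF bij_betw_inv_into[OF ix]] by auto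
        have "((\<lambda>s. \<gamma> s $ ix i) has_vector_derivative
               (\<gamma> t $ ix i * R (\<gamma> t) i - L (\<gamma> t) i * \<gamma> t $ ix i)) (at t)" by (rule H[rule_format, OF i(1)])
        then have "((\<lambda>s. \<gamma> s $ ix i) has_vector_derivative V (\<gamma> t) $ ix i) (at t)"
          using Vc[OF i(1), of "\<gamma> t"] by simp
        then show ?thesis by (simp only: i(2))
      qed
      have bl: "bounded_linear (\<lambda>y. l (axv k y))" for k
        using linear_compose[OF linear_axv l] by (simp add: linear_conv_bounded_linear o_def)
      have "((\<lambda>s. \<Sum>k\<in>UNIV. l (axv k (\<gamma> s $ k))) has_vector_derivative (\<Sum>k\<in>UNIV. l (axv k (V (\<gamma> t) $ k)))) (at t)"
        by (intro has_vector_derivative_sum bounded_linear.has_vector_derivative[OF bl] comp)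
      then have "((\<lambda>s. l (\<gamma> s)) has_vector_derivative l (V (\<gamma> t))) (at t)"
        by (simp only: linear_decomp[OF l, symmetric])
      then show "((\<lambda>s. l (\<gamma> s)) has_real_derivative PB form n ix A B C D \<Phi> l (\<gamma> t)) (at t)"
        using K[OF l] by (simp add: has_real_derivative_iff_has_vector_derivative)
    qed
  qed
qed

end
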